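(* Let $(X,\rho)$ be a bounded metric space, $A\in CL(X)$, $(A_k)\subset CL(X)$ and let $f\colon[0,\infty)\to[0,\infty)$ be an unbounded modulus. If $(A_k)$ is $f$-Wijsman statistically convergent to $A$, then $(A_k)$ is Wijsman Cesàro summable to $A$, i.e. $\lim_{n\to\infty}\frac1n\sum_{k=1}^n d(x,A_k)=d(x,A)$ for every $x\in X$.
   Context: A modulus is a function $f\colon[0,\infty)\to[0,\infty)$ such that $f(x)=0$ iff $x=0$, $f$ is subadditive, increasing and continuous. $CL(X)$ denotes the set of all non-empty closed subsets of $(X,\rho)$, and $d(x,B)=\inf_{y\in B}\rho(x,y)$. For an unbounded modulus $f$ and $K\subseteq\mathbb N$, the $f$-density is $d^f(K)=\lim_{n\to\infty}\frac{f(|\{k\le n:k\in K\}|)}{f(n)}$ (when the limit exists). $(A_k)$ is $f$-Wijsman statistically convergent to $A$ if for every $x\in X$ and every $\varepsilon>0$ the set $\{k:|d(x,A_k)-d(x,A)|\ge\varepsilon\}$ has $f$-density $0$. *)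

theory Defs
  imports "HOL-Analysis.Analysis"
begin

definition modulus :: "(real \<Rightarrow> real) \<Rightarrow> bool" where
  "modulus f \<longleftrightarrow>
     (\<forall>x\<ge>0. f x \<ge> 0) \<and>
     (\<forall>x\<ge>0. f x = 0 \<longleftrightarrow> x = 0) \<and>
     (\<forall>x\<ge>0. \<forall>y\<ge>0. f (x + y) \<le> f x + f y) \<and>
     mono_on {0..} f \<and>
     continuous_on {0..} f"

definition unbounded_modulus :: "(real \<Rightarrow> real) \<Rightarrow> bool" where
  "unbounded_modulus f \<longleftrightarrow> modulus f \<and> \<not> bdd_above (f ` {0..})"

definition f_density_zero :: "(real \<Rightarrow> real) \<Rightarrow> nat set \<Rightarrow> bool" where
  "f_density_zero f K \<longleftrightarrow>
     (\<lambda>n. f (real (card {k \<in> K. 1 \<le> k \<and> k \<le> n})) / f (real n)) \<longlonglongrightarrow> 0"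

definition f_wijsman_stat_conv ::
  "(real \<Rightarrow> real) \<Rightarrow> (nat \<Rightarrow> 'a::metric_space set) \<Rightarrow> 'a set \<Rightarrow> bool" where
  "f_wijsman_stat_conv f A B \<longleftrightarrow>
     (\<forall>x. \<forall>\<epsilon>>0. f_density_zero f {k. \<bar>infdist x (A k) - infdist x B\<bar> \<ge> \<epsilon>})"

end

theory Submission
  imports Defs
begin

lemma mod_mult_bound:
  assumes "modulus f" "y \<ge> 0"
  shows "f (real p * y) \<le> real p * f y"
proof (induction p)
  case 0
  then show ?case using assms unfolding modulus_def by auto
next
  case (Suc p)
  have "f (real (Suc p) * y) = f (real p * y + y)" by (simp add: algebra_simps)
  also have "\<dots> \<le> f (real p * y) + f y"
    using assms unfolding modulus_def by auto
  also have "\<dots> \<le> real (Suc p) * f y" using Suc by (simp add: algebra_simps)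
  finally show ?case .
qed

lemma density_nat:
  assumes m: "modulus f" and d: "f_density_zero f K"
  shows "(\<lambda>n. real (card {k \<in> K. 1 \<le> k \<and> k \<le> n}) / real n) \<longlonglongrightarrow> 0"
proof (rule LIMSEQ_I)
  fix r :: real assume r: "r > 0"
  define p :: nat where "p = nat \<lceil>1/r\<rceil> + 1"
  have pr: "1 / real p < r"
  proof -
    have "1/r < real p" unfolding p_def by linarith
    hence "1 < r * real p" using r by (simp add: field_simps)
    moreover have "real p > 0" unfolding p_def by simp
    ultimately show ?thesis by (simp add: field_simps)
  qed
  have pp: "real p > 0" unfolding p_def by simp
  define c where "c n = real (card {k \<in> K. 1 \<le> k \<and> k \<le> n})" for n
  have lim: "(\<lambda>n. f (c n) / f (real n)) \<longlonglongrightarrow> 0" using d unfolding f_density_zero_def c_def .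
  obtain N where N: "\<And>n. n \<ge> N \<Longrightarrow> norm (f (c n) / f (real n) - 0) < 1 / real p"
    using LIMSEQ_D[OF lim] pp by (metis divide_pos_pos zero_less_one)
  show "\<exists>no. \<forall>n\<ge>no. norm (real (card {k \<in> K. 1 \<le> k \<and> k \<le> n}) / real n - 0) < r"
  proof (intro exI allI impI)
    fix n assume n: "n \<ge> max N 1"
    have c0: "c n \<ge> 0" unfolding c_def by simp
    have fn: "f (real n) > 0" using m n unfolding modulus_def
      by (metis less_eq_real_def max.bounded_iff of_nat_0_le_iff of_nat_le_0_iff not_one_le_zero)
    have fc0: "f (c n) \<ge> 0" using m c0 unfolding modulus_def by auto
    have lt: "c n / real n < 1 / real p"
    proof (rule ccontr)
      assume "\<not> ?thesis"
      hence "c n / real n \<ge> 1 / real p" by simp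
      hence "real n \<le> real p * c n" using n pp by (simp add: field_simps)
      hence "f (real n) \<le> f (real p * c n)"
        using m c0 pp unfolding modulus_def by (auto intro: mono_onD)
      also have "\<dots> \<le> real p * f (c n)" using mod_mult_bound[OF m c0] .
      finally have "f (c n) / f (real n) \<ge> 1 / real p" using fn pp by (simp add: field_simps)
      moreover have "norm (f (c n) / f (real n) - 0) < 1 / real p" using N n by simp
      ultimately show False using fc0 fn by simp
    qed
    show "norm (real (card {k \<in> K. 1 \<le> k \<and> k \<le> n}) / real n - 0) < r"
      using lt pr c0 unfolding c_def by simp
  qed
qed

theorem corollary3p5:
  fixes A :: "nat \<Rightarrow> 'a::metric_space set" and B :: "'a set" and f :: "real \<Rightarrow> real"
  assumes "bounded (UNIV :: 'a set)"
    and "closed B" "B \<noteq> {}"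
    and "\<And>k. closed (A k)" "\<And>k. A k \<noteq> {}"
    and "unbounded_modulus f"
    and "f_wijsman_stat_conv f A B"
  shows "\<forall>x. (\<lambda>n. (\<Sum>k=1..n. infdist x (A k)) / real n) \<longlonglongrightarrow> infdist x B"
proof
  fix x :: 'a
  obtain e where e: "\<And>y z::'a. dist y z \<le> e"
    using assms(1) by (meson UNIV_I bounded_two_points)
  have e0: "e \<ge> 0" using e[of x x] by simp
  have bd: "infdist x S \<le> e" if "S \<noteq> {}" for S
    using that infdist_le e by (metis ex_in_conv order_trans)
  have m: "modulus f" using assms(6) unfolding unbounded_modulus_def by simp
  have ab: "\<bar>infdist x (A k) - infdist x B\<bar> \<le> e" for k
    using bd[OF assms(5)[of k]] bd[OF assms(3)] infdist_nonneg[of x "A k"] infdist_nonneg[of x B]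
    by linarith
  show "(\<lambda>n. (\<Sum>k=1..n. infdist x (A k)) / real n) \<longlonglongrightarrow> infdist x B"
  proof (rule LIMSEQ_I)
    fix r :: real assume r: "r > 0"
    define \<epsilon> where "\<epsilon> = r / 2"
    define K where "K = {k. \<bar>infdist x (A k) - infdist x B\<bar> \<ge> \<epsilon>}"
    have "f_density_zero f K" using assms(7) r unfolding f_wijsman_stat_conv_def K_def \<epsilon>_def
      by (metis half_gt_zero)
    from density_nat[OF m this]
    have lim: "(\<lambda>n. real (card {k \<in> K. 1 \<le> k \<and> k \<le> n}) / real n) \<longlonglongrightarrow> 0" .
    have rr: "r / (2 * (e + 1)) > 0" using r e0 by simp
    obtain N where N: "\<And>n. n \<ge> N \<Longrightarrow> norm (real (card {k \<in> K. 1 \<le> k \<and> k \<le> n}) / real n - 0) < r / (2 * (e + 1))"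
      using LIMSEQ_D[OF lim rr] by blast
    show "\<exists>no. \<forall>n\<ge>no. norm ((\<Sum>k=1..n. infdist x (A k)) / real n - infdist x B) < r"
    proof (intro exI allI impI)
      fix n assume n: "n \<ge> max N 1"
      define c where "c = real (card {k \<in> K. 1 \<le> k \<and> k \<le> n})"
      have cN: "c / real n < r / (2 * (e + 1))" using N[of n] n unfolding c_def by simp
      have npos: "real n > 0" using n by simp
      have "(\<Sum>k=1..n. infdist x (A k)) / real n - infdist x B
            = (\<Sum>k=1..n. (infdist x (A k) - infdist x B)) / real n"
        using npos by (simp add: sum_subtractf field_simps)
      hence "\<bar>(\<Sum>k=1..n. infdist x (A k)) / real n - infdist x B\<bar>
            = \<bar>\<Sum>k=1..n. (infdist x (A k) - infdist x B)\<bar> / real n"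
        using npos by simp
      also have "\<dots> \<le> (\<Sum>k=1..n. \<bar>infdist x (A k) - infdist x B\<bar>) / real n"
        using npos by (intro divide_right_mono sum_abs) auto
      also have "\<dots> \<le> (\<Sum>k=1..n. e * (if k \<in> K then 1 else 0) + \<epsilon>) / real n"
      proof (intro divide_right_mono sum_mono)
        fix k show "\<bar>infdist x (A k) - infdist x B\<bar> \<le> e * (if k \<in> K then 1 else 0) + \<epsilon>"
          using ab[of k] r unfolding K_def \<epsilon>_def by auto
      qed (use npos in auto)
      also have "(\<Sum>k=1..n. e * (if k \<in> K then 1 else 0) + \<epsilon>) = e * c + \<epsilon> * real n"
      proof -
        have "(\<Sum>k=1..n. (if k \<in> K then 1 else 0::real)) = real (card {k\<in>{1..n}. k \<in> K})"
          by (simp add: sum.inter_filter[symmetric])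
        also have "{k\<in>{1..n}. k \<in> K} = {k \<in> K. 1 \<le> k \<and> k \<le> n}" by auto
        finally show ?thesis unfolding c_def by (simp add: sum.distrib sum_distrib_left[symmetric])
      qed
      also have "(e * c + \<epsilon> * real n) / real n = e * (c / real n) + \<epsilon>"
        using npos by (simp add: field_simps)
      also have "\<dots> \<le> e * (r / (2 * (e + 1))) + \<epsilon>"
        using cN e0 by (intro add_right_mono mult_left_mono) auto
      also have "\<dots> < r"
      proof -
        have "e * (r / (2 * (e + 1))) < r / 2" using e0 r by (simp add: field_simps)
        thus ?thesis unfolding \<epsilon>_def by linarith
      qed
      finally show "norm ((\<Sum>k=1..n. infdist x (A k)) / real n - infdist x B) < r" by simp
    qed
  qed
qed

end
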